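(* Let $\mu_n$ be the probability measure on the set of $(n,m,d_1,d_2)$-biregular bipartite graphs induced (via the incidence map) by a uniformly random $(d_1,d_2)$-regular hypergraph on $n$ vertices, and let $\mu_n'$ be the uniform measure on the set of all $(n,m,d_1,d_2)$-biregular bipartite graphs. Then $$d_{\mathrm{TV}}(\mu_n,\mu_n')\leq\left(\frac{nd_1}{d_2}\right)^2\left(\frac{4ed_2}{n}\right)^{d_2}.$$
   Context: An $(n,m,d_1,d_2)$-biregular bipartite graph is a simple bipartite graph on $V_1=[n]$, $V_2=[m]$ with all degrees in $V_1$ equal to $d_1$ and in $V_2$ equal to $d_2$, $m=nd_1/d_2$. A $(d_1,d_2)$-regular hypergraph is a hypergraph without repeated hyperedges in which every hyperedge has exactly $d_2$ vertices and every vertex lies in exactly $d_1$ hyperedges; here the vertex set is $[n]$ and the $m=nd_1/d_2$ hyperedges are labeled $e_1,\dots,e_m$; a random one is uniform among all such. The incidence map sends a hypergraph $H$ to the bipartite graph on $V_1=[n]$, $V_2=\{e_1,\dots,e_m\}$ with $i\sim e_j$ iff $i\in e_j$; it is a bijection onto the set of biregular bipartite graphs in which no two vertices of $V_2$ have the same neighborhood. *)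

theory Defs
  imports "HOL-Probability.Probability_Mass_Function" "HOL-Library.FuncSet"
begin

definition biregular :: "nat \<Rightarrow> nat \<Rightarrow> nat \<Rightarrow> nat \<Rightarrow> (nat \<times> nat) set set" where
  "biregular n m d1 d2 =
     {E. E \<subseteq> {0..<n} \<times> {0..<m}
         \<and> (\<forall>i<n. card {j. (i, j) \<in> E} = d1)
         \<and> (\<forall>j<m. card {i. (i, j) \<in> E} = d2)}"

text \<open>(d1,d2)-regular hypergraphs on vertex set {0..<n} with labelled hyperedges
  e_0,...,e_(m-1): each hyperedge a d2-subset of the vertex set, no repeated hyperedges,
  every vertex in exactly d1 hyperedges.\<close>

definition hypergraphs :: "nat \<Rightarrow> nat \<Rightarrow> nat \<Rightarrow> nat \<Rightarrow> (nat \<Rightarrow> nat set) set" where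
  "hypergraphs n m d1 d2 =
     {e \<in> {0..<m} \<rightarrow>\<^sub>E {A. A \<subseteq> {0..<n} \<and> card A = d2}.
        inj_on e {0..<m} \<and> (\<forall>i<n. card {j \<in> {0..<m}. i \<in> e j} = d1)}"

definition incidence :: "nat \<Rightarrow> (nat \<Rightarrow> nat set) \<Rightarrow> (nat \<times> nat) set" where
  "incidence m e = {(i, j). j < m \<and> i \<in> e j}"

definition tv_dist :: "'a pmf \<Rightarrow> 'a pmf \<Rightarrow> real" where
  "tv_dist p q = (SUP A. \<bar>measure_pmf.prob p A - measure_pmf.prob q A\<bar>)"

definition mu_hyp :: "nat \<Rightarrow> nat \<Rightarrow> nat \<Rightarrow> nat \<Rightarrow> (nat \<times> nat) set pmf" where
  "mu_hyp n m d1 d2 = map_pmf (incidence m) (pmf_of_set (hypergraphs n m d1 d2))"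

definition mu_unif :: "nat \<Rightarrow> nat \<Rightarrow> nat \<Rightarrow> nat \<Rightarrow> (nat \<times> nat) set pmf" where
  "mu_unif n m d1 d2 = pmf_of_set (biregular n m d1 d2)"

end

theory Submission
  imports Defs
begin

definition colN :: "(nat \<times> nat) set \<Rightarrow> nat \<Rightarrow> nat set" where
  "colN E y = {x. (x,y) \<in> E}"
definition rowN :: "(nat \<times> nat) set \<Rightarrow> nat \<Rightarrow> nat set" where
  "rowN E x = {y. (x,y) \<in> E}"

lemma card_swap1:
  assumes "finite S" "a \<in> S" "b \<notin> S"
  shows "card (insert b (S - {a})) = card S"
proof -
  have "card S > 0" using assms card_gt_0_iff by blast
  then show ?thesis using assms by (simp add: card_Diff_singleton)
qed

lemma bir_sub: "E \<in> biregular n m d1 d2 \<Longrightarrow> E \<subseteq> {0..<n} \<times> {0..<m}"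
  unfolding biregular_def by blast
lemma bir_fin: "E \<in> biregular n m d1 d2 \<Longrightarrow> finite E"
  by (rule finite_subset[OF bir_sub]) auto
lemma colN_sub: "E \<in> biregular n m d1 d2 \<Longrightarrow> colN E y \<subseteq> {0..<n}"
  using bir_sub unfolding colN_def by blast
lemma rowN_sub: "E \<in> biregular n m d1 d2 \<Longrightarrow> rowN E x \<subseteq> {0..<m}"
  using bir_sub unfolding rowN_def by blast
lemma colN_fin: "E \<in> biregular n m d1 d2 \<Longrightarrow> finite (colN E y)"
  by (rule finite_subset[OF colN_sub]) auto
lemma rowN_fin: "E \<in> biregular n m d1 d2 \<Longrightarrow> finite (rowN E x)"
  by (rule finite_subset[OF rowN_sub]) auto
lemma bir_row: "E \<in> biregular n m d1 d2 \<Longrightarrow> x < n \<Longrightarrow> card (rowN E x) = d1"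
  unfolding biregular_def rowN_def by blast
lemma bir_col: "E \<in> biregular n m d1 d2 \<Longrightarrow> y < m \<Longrightarrow> card (colN E y) = d2"
  unfolding biregular_def colN_def by blast
lemma bir_finset: "finite (biregular n m d1 d2)"
proof -
  have "biregular n m d1 d2 \<subseteq> Pow ({0..<n} \<times> {0..<m})" unfolding biregular_def by blast
  then show ?thesis by (rule finite_subset) simp
qed

lemma card_rows:
  assumes "E \<in> biregular n m d1 d2" "X \<subseteq> {0..<n}"
  shows "card (E \<inter> (X \<times> UNIV)) = (\<Sum>x\<in>X. card (rowN E x))"
proof -
  have "E \<inter> (X \<times> UNIV) = Sigma X (rowN E)" by (auto simp: rowN_def)
  moreover have "finite X" using assms(2) by (rule finite_subset) simp
  ultimately show ?thesis using rowN_fin[OF assms(1)] by simp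
qed

lemma card_cols:
  assumes "E \<in> biregular n m d1 d2" "Y \<subseteq> {0..<m}"
  shows "card (E \<inter> (UNIV \<times> Y)) = (\<Sum>y\<in>Y. card (colN E y))"
proof -
  have "E \<inter> (UNIV \<times> Y) = (\<lambda>(y,x). (x,y)) ` Sigma Y (colN E)" by (auto simp: colN_def)
  moreover have "inj_on (\<lambda>(y,x). (x,y)) (Sigma Y (colN E))" by (auto simp: inj_on_def)
  moreover have "finite Y" using assms(2) by (rule finite_subset) simp
  ultimately show ?thesis using colN_fin[OF assms(1)] by (simp add: card_image)
qed



lemma sw_inv:
  "(i,k)\<in>E \<Longrightarrow> (i',k')\<in>E \<Longrightarrow> (i',k)\<notin>E \<Longrightarrow> (i,k')\<notin>E \<Longrightarrow>
   insert (i,k) (insert (i',k') (insert (i',k) (insert (i,k') (E - {(i,k),(i',k')})) - {(i',k),(i,k')})) = E"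
  by auto

lemma sw_props:
  fixes E :: "(nat \<times> nat) set"
  assumes E: "E \<in> biregular n m d1 d2"
    and jk: "j < m" "k < m" "j \<noteq> k"
    and i: "i \<in> colN E j" "i \<in> colN E k"
    and e: "(i',k') \<in> E" and i': "i' \<notin> colN E j" "i' \<notin> colN E k"
    and k': "k' \<notin> rowN E i"
  defines "H \<equiv> insert (i',k) (insert (i,k') (E - {(i,k),(i',k')}))"
  shows "H \<in> biregular n m d1 d2"
    and "colN H j \<inter> colN H k = (colN E j \<inter> colN E k) - {i}"
    and "i \<in> colN H j - colN H k" "i' \<in> colN H k - colN H j" "k' \<in> rowN H i"
proof -
  have sub: "E \<subseteq> {0..<n} \<times> {0..<m}" using bir_sub[OF E] .
  have ii: "i \<noteq> i'" using i i' by auto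
  have kk: "k' \<noteq> k" "k' \<noteq> j" using e i' by (auto simp: colN_def)
  have ik: "(i,k) \<in> E" using i by (simp add: colN_def)
  have ik': "(i,k') \<notin> E" using k' by (simp add: rowN_def)
  have i'k: "(i',k) \<notin> E" using i' by (simp add: colN_def)
  have lt: "i < n" "i' < n" "k' < m" using sub e ik by auto
  have cj: "colN H j = colN E j" using kk jk unfolding H_def colN_def by auto
  have ck: "colN H k = insert i' (colN E k - {i})" using kk ii unfolding H_def colN_def by auto
  have ck': "colN H k' = insert i (colN E k' - {i'})" using kk ii unfolding H_def colN_def by auto
  have cy: "colN H y = colN E y" if "y \<noteq> k" "y \<noteq> k'" for y
    using that unfolding H_def colN_def by auto
  have ri: "rowN H i = insert k' (rowN E i - {k})" using kk ii unfolding H_def rowN_def by auto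
  have ri': "rowN H i' = insert k (rowN E i' - {k'})" using kk ii unfolding H_def rowN_def by auto
  have rx: "rowN H x = rowN E x" if "x \<noteq> i" "x \<noteq> i'" for x
    using that unfolding H_def rowN_def by auto
  have Hsub: "H \<subseteq> {0..<n} \<times> {0..<m}" using sub lt jk unfolding H_def by auto
  have rows: "card (rowN H x) = d1" if "x < n" for x
  proof -
    consider "x = i" | "x = i'" | "x \<noteq> i" "x \<noteq> i'" by blast
    then show ?thesis
    proof cases
      case 1
      then show ?thesis using ri card_swap1[OF rowN_fin[OF E], of k i k'] ik ik' bir_row[OF E that]
        by (simp add: rowN_def)
    next
      case 2
      then show ?thesis using ri' card_swap1[OF rowN_fin[OF E], of k' i' k] e i'k bir_row[OF E that]
        by (simp add: rowN_def)
    next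
      case 3
      then show ?thesis using rx bir_row[OF E that] by simp
    qed
  qed
  have cols: "card (colN H y) = d2" if "y < m" for y
  proof -
    consider "y = k" | "y = k'" | "y \<noteq> k" "y \<noteq> k'" by blast
    then show ?thesis
    proof cases
      case 1
      then show ?thesis using ck card_swap1[OF colN_fin[OF E], of i k i'] ik i'k bir_col[OF E that]
        by (simp add: colN_def)
    next
      case 2
      then show ?thesis using ck' card_swap1[OF colN_fin[OF E], of i' k' i] e ik' bir_col[OF E that]
        by (simp add: colN_def)
    next
      case 3
      then show ?thesis using cy bir_col[OF E that] by simp
    qed
  qed
  show "H \<in> biregular n m d1 d2"
    unfolding biregular_def using Hsub rows cols by (simp add: rowN_def colN_def)
  show "colN H j \<inter> colN H k = (colN E j \<inter> colN E k) - {i}"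
    using cj ck i' by auto
  show "i \<in> colN H j - colN H k" using cj ck i ii by auto
  show "i' \<in> colN H k - colN H j" using cj ck i' by auto
  show "k' \<in> rowN H i" using ri kk by auto
qed


lemma Vbound:
  fixes E :: "(nat \<times> nat) set"
  assumes E: "E \<in> biregular n m d1 d2" and jk: "j < m" "k < m"
    and i: "i \<in> colN E j"
  shows "n*d1 - 3*d1*d2 \<le> card (E \<inter> ((- (colN E j \<union> colN E k)) \<times> (- rowN E i)))"
proof -
  define U where "U = colN E j \<union> colN E k"
  define V where "V = E \<inter> ((- U) \<times> (- rowN E i))"
  have fE: "finite E" using bir_fin[OF E] .
  have sub: "E \<subseteq> V \<union> (E \<inter> (U \<times> UNIV)) \<union> (E \<inter> (UNIV \<times> rowN E i))"
    unfolding V_def by auto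
  have "card E \<le> card (V \<union> (E \<inter> (U \<times> UNIV)) \<union> (E \<inter> (UNIV \<times> rowN E i)))"
    by (rule card_mono[OF _ sub]) (use fE in \<open>auto simp: V_def\<close>)
  also have "\<dots> \<le> card V + card (E \<inter> (U \<times> UNIV)) + card (E \<inter> (UNIV \<times> rowN E i))"
    by (meson card_Un_le add_le_mono le_refl order_trans)
  finally have c1: "card E \<le> card V + card (E \<inter> (U \<times> UNIV)) + card (E \<inter> (UNIV \<times> rowN E i))" .
  have "E \<inter> ({0..<n} \<times> UNIV) = E" using bir_sub[OF E] by auto
  then have "card E = (\<Sum>x\<in>{0..<n}. card (rowN E x))"
    using card_rows[OF E, of "{0..<n}"] by simp
  also have "\<dots> = n * d1" using bir_row[OF E] by simp
  finally have cE: "card E = n * d1" .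
  have Usub: "U \<subseteq> {0..<n}" unfolding U_def using colN_sub[OF E] by blast
  have "card (E \<inter> (U \<times> UNIV)) = (\<Sum>x\<in>U. card (rowN E x))" using card_rows[OF E Usub] .
  also have "\<dots> = card U * d1" using bir_row[OF E] Usub by (simp add: subset_iff)
  finally have cU: "card (E \<inter> (U \<times> UNIV)) = card U * d1" .
  have "card U \<le> card (colN E j) + card (colN E k)" unfolding U_def by (rule card_Un_le)
  then have cU2: "card U \<le> 2 * d2" using bir_col[OF E] jk by simp
  have iln: "i < n" using colN_sub[OF E, of j] i by (auto simp: subset_iff)
  have "card (E \<inter> (UNIV \<times> rowN E i)) = (\<Sum>y\<in>rowN E i. card (colN E y))"
    using card_cols[OF E rowN_sub[OF E]] .
  also have "\<dots> = card (rowN E i) * d2" using bir_col[OF E] rowN_sub[OF E, of i] by (simp add: subset_iff)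
  also have "\<dots> = d1 * d2" using bir_row[OF E iln] by simp
  finally have cR: "card (E \<inter> (UNIV \<times> rowN E i)) = d1 * d2" .
  have "card U * d1 \<le> 2 * d2 * d1" using cU2 by simp
  then have "n * d1 \<le> card V + 2 * d2 * d1 + d1 * d2" using c1 cE cU cR by linarith
  then show ?thesis unfolding V_def U_def by (simp add: algebra_simps)
qed


lemma switch_step:
  fixes n m d1 d2 j k t :: nat
  assumes jk: "j < m" "k < m" "j \<noteq> k"
  shows "card {E \<in> biregular n m d1 d2. card (colN E j \<inter> colN E k) = t} * (t * (n*d1 - 3*d1*d2))
    \<le> card {E \<in> biregular n m d1 d2. card (colN E j \<inter> colN E k) = t - 1} * ((d2-(t-1)) * ((d2-(t-1)) * d1))"
proof -
  define B where "B = biregular n m d1 d2"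
  define A where "A s = {E \<in> B. card (colN E j \<inter> colN E k) = s}" for s
  define V where "V E i = E \<inter> ((- (colN E j \<union> colN E k)) \<times> (- rowN E i))" for E i
  define T where "T = Sigma (A t) (\<lambda>E. Sigma (colN E j \<inter> colN E k) (V E))"
  define sw :: "(nat \<times> nat) set \<Rightarrow> nat \<Rightarrow> nat \<Rightarrow> nat \<Rightarrow> (nat \<times> nat) set" where "sw E i i' k' = insert (i',k) (insert (i,k') (E - {(i,k),(i',k')}))" for E i i' k'
  define f :: "(nat \<times> nat) set \<times> nat \<times> nat \<times> nat \<Rightarrow> (nat \<times> nat) set \<times> nat \<times> nat \<times> nat" where "f = (\<lambda>(E,i,i',k'). (sw E i i' k', i, i', k'))"
  define W where "W = Sigma (A (t-1)) (\<lambda>H. Sigma (colN H j - colN H k) (\<lambda>i. (colN H k - colN H j) \<times> rowN H i))"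
  have finB: "finite B" unfolding B_def by (rule bir_finset)
  have finA: "finite (A s)" for s unfolding A_def using finB by simp
  have AB: "E \<in> biregular n m d1 d2" if "E \<in> A s" for E s using that unfolding A_def B_def by simp
  have finC: "finite (colN E y)" if "E \<in> A s" for E s y using colN_fin[OF AB[OF that]] .
  have finR: "finite (rowN E y)" if "E \<in> A s" for E s y using rowN_fin[OF AB[OF that]] .
  have finV: "finite (V E i)" if "E \<in> biregular n m d1 d2" for E i
    unfolding V_def using bir_fin[OF that] by simp
  have "card T = (\<Sum>E\<in>A t. card (Sigma (colN E j \<inter> colN E k) (V E)))"
    unfolding T_def
    by (rule card_SigmaI) (use finA AB finV finC in \<open>auto intro!: finite_SigmaI\<close>)
  also have "\<dots> = (\<Sum>E\<in>A t. \<Sum>i\<in>colN E j \<inter> colN E k. card (V E i))"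
    by (rule sum.cong) (use AB finV finC in auto)
  also have "\<dots> \<ge> (\<Sum>E\<in>A t. t * (n*d1 - 3*d1*d2))"
  proof (rule sum_mono)
    fix E assume EA: "E \<in> A t"
    have EB: "E \<in> biregular n m d1 d2" using AB[OF EA] by simp
    have "card (colN E j \<inter> colN E k) * (n*d1 - 3*d1*d2) \<le> (\<Sum>i\<in>colN E j \<inter> colN E k. card (V E i))"
      using sum_bounded_below[of "colN E j \<inter> colN E k" "n*d1 - 3*d1*d2" "\<lambda>i. card (V E i)"]
        Vbound[OF EB jk(1,2)] unfolding V_def by auto
    then show "t * (n*d1 - 3*d1*d2) \<le> (\<Sum>i\<in>colN E j \<inter> colN E k. card (V E i))"
      using EA unfolding A_def by simp
  qed
  finally have lower: "card (A t) * (t * (n*d1 - 3*d1*d2)) \<le> card T" by simp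
  have inj: "inj_on f T"
  proof (rule inj_onI)
    fix x y assume x: "x \<in> T" and y: "y \<in> T" and fxy: "f x = f y"
    obtain E i i' k' where xe: "x = (E,i,i',k')" by (cases x) auto
    obtain E2 i2 i2' k2' where ye: "y = (E2,i2,i2',k2')" by (cases y) auto
    have eq: "i2 = i" "i2' = i'" "k2' = k'" "sw E i i' k' = sw E2 i i' k'"
      using fxy unfolding xe ye f_def by auto
    have c1: "(i,k)\<in>E" "(i',k')\<in>E" "(i',k)\<notin>E" "(i,k')\<notin>E"
      using x unfolding xe T_def V_def by (auto simp: colN_def rowN_def)
    have c2: "(i,k)\<in>E2" "(i',k')\<in>E2" "(i',k)\<notin>E2" "(i,k')\<notin>E2"
      using y unfolding ye eq T_def V_def by (auto simp: colN_def rowN_def)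
    have "E = E2" using sw_inv[of i k E i' k', OF c1] sw_inv[of i k E2 i' k', OF c2] eq(4)
      unfolding sw_def by metis
    then show "x = y" using xe ye eq by simp
  qed
  have img: "f ` T \<subseteq> W"
  proof
    fix z assume "z \<in> f ` T"
    then obtain E i i' k' where x: "(E,i,i',k') \<in> T" and z: "z = f (E,i,i',k')" by auto
    have EA: "E \<in> A t" and EB: "E \<in> biregular n m d1 d2" using x AB unfolding T_def B_def by auto
    have i: "i \<in> colN E j" "i \<in> colN E k" using x unfolding T_def by auto
    have e: "(i',k') \<in> E" "i' \<notin> colN E j" "i' \<notin> colN E k" "k' \<notin> rowN E i"
      using x unfolding T_def V_def by auto
    note P = sw_props[OF EB jk i e]
    have fin: "finite (colN E j \<inter> colN E k)" using colN_fin[OF EB] by simp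
    have ci: "i \<in> colN E j \<inter> colN E k" using i by simp
    have "card (colN (sw E i i' k') j \<inter> colN (sw E i i' k') k) = t - 1"
      using P(2) EA card_Diff_singleton[OF ci] unfolding sw_def A_def by simp
    then have "sw E i i' k' \<in> A (t-1)" using P(1) unfolding A_def B_def sw_def by simp
    then show "z \<in> W" using P(3-5) unfolding z f_def W_def sw_def by simp
  qed
  have "card T = card (f ` T)" using card_image[OF inj] by simp
  also have "\<dots> \<le> card W"
    by (rule card_mono[OF _ img]) (unfold W_def, use finA finC finR in \<open>auto intro!: finite_SigmaI\<close>)
  also have "card W = (\<Sum>H\<in>A (t-1). (d2-(t-1)) * ((d2-(t-1)) * d1))"
    unfolding W_def
  proof (subst card_SigmaI)
    show "finite (A (t-1))" by (rule finA)
    show "\<forall>a\<in>A (t - 1). finite (SIGMA i:colN a j - colN a k. (colN a k - colN a j) \<times> rowN a i)"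
      using finC finR by (auto intro!: finite_SigmaI)
    show "(\<Sum>a\<in>A (t - 1). card (SIGMA i:colN a j - colN a k. (colN a k - colN a j) \<times> rowN a i)) =
      (\<Sum>H\<in>A (t - 1). (d2 - (t - 1)) * ((d2 - (t - 1)) * d1))"
    proof (rule sum.cong)
      fix H assume HA: "H \<in> A (t-1)"
      have HB: "H \<in> biregular n m d1 d2" using AB[OF HA] by simp
      have cI: "card (colN H j \<inter> colN H k) = t - 1" using HA unfolding A_def by simp
      have d1: "card (colN H j - colN H k) = d2 - (t-1)"
        using card_Diff_subset_Int[of "colN H j" "colN H k"] colN_fin[OF HB] cI bir_col[OF HB] jk by simp
      have d2': "card (colN H k - colN H j) = d2 - (t-1)"
        using card_Diff_subset_Int[of "colN H k" "colN H j"] colN_fin[OF HB] cI bir_col[OF HB] jk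
        by (simp add: Int_commute)
      have "card (SIGMA i:colN H j - colN H k. (colN H k - colN H j) \<times> rowN H i)
          = (\<Sum>i\<in>colN H j - colN H k. card ((colN H k - colN H j) \<times> rowN H i))"
        using colN_fin[OF HB] rowN_fin[OF HB] by (simp)
      also have "\<dots> = (\<Sum>i\<in>colN H j - colN H k. (d2 - (t-1)) * d1)"
      proof (rule sum.cong)
        fix i assume "i \<in> colN H j - colN H k"
        then have "i < n" using colN_sub[OF HB, of j] by auto
        then show "card ((colN H k - colN H j) \<times> rowN H i) = (d2 - (t-1)) * d1"
          using d2' bir_row[OF HB] by (simp add: card_cartesian_product)
      qed simp
      also have "\<dots> = (d2 - (t - 1)) * ((d2 - (t - 1)) * d1)" using d1 by simp
      finally show "card (SIGMA i:colN H j - colN H k. (colN H k - colN H j) \<times> rowN H i) = (d2 - (t - 1)) * ((d2 - (t - 1)) * d1)" .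
    qed simp
  qed
  also have "\<dots> = card (A (t-1)) * ((d2-(t-1)) * ((d2-(t-1)) * d1))" by simp
  finally show ?thesis using lower unfolding A_def B_def by simp
qed


lemma chain:
  fixes n m d1 d2 j k :: nat
  assumes jk: "j < m" "k < m" "j \<noteq> k" and d1: "d1 > 0"
  shows "card {E \<in> biregular n m d1 d2. colN E j = colN E k} * (n - 3*d2)^d2
           \<le> card (biregular n m d1 d2) * d2^d2"
proof -
  define B where "B = biregular n m d1 d2"
  define a where "a s = card {E \<in> B. card (colN E j \<inter> colN E k) = s}" for s
  define c where "c = n - 3*d2"
  have step: "a (Suc t) * (Suc t * c) \<le> a t * (d2-t)^2" for t
  proof -
    have h: "a (Suc t) * (Suc t * (n*d1 - 3*d1*d2)) \<le> a t * ((d2-t)*((d2-t)*d1))"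
      using switch_step[OF jk, of n d1 d2 "Suc t"] unfolding a_def B_def by simp
    have "n*d1 - 3*d1*d2 = c*d1" unfolding c_def by (simp add: diff_mult_distrib algebra_simps)
    then have "(a (Suc t) * (Suc t * c)) * d1 \<le> (a t * (d2-t)^2) * d1"
      using h by (simp add: power2_eq_square algebra_simps)
    then show ?thesis using d1 by simp
  qed
  have P: "a t * fact t * c^t \<le> card B * (\<Prod>s<t. d2 - s)^2" for t
  proof (induction t)
    case 0
    have "a 0 \<le> card B" unfolding a_def B_def by (rule card_mono[OF bir_finset]) auto
    then show ?case by simp
  next
    case (Suc t)
    have "a (Suc t) * fact (Suc t) * c^(Suc t) = (a (Suc t) * (Suc t * c)) * (fact t * c^t)"
      by (simp add: algebra_simps)
    also have "\<dots> \<le> (a t * (d2-t)^2) * (fact t * c^t)"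
      using step by (rule mult_right_mono) simp
    also have "\<dots> = (a t * fact t * c^t) * (d2-t)^2" by (simp add: algebra_simps)
    also have "\<dots> \<le> (card B * (\<Prod>s<t. d2 - s)^2) * (d2-t)^2"
      using Suc.IH by (rule mult_right_mono) simp
    also have "\<dots> = card B * ((\<Prod>s<t. d2 - s) * (d2 - t))^2" by (simp only: power_mult_distrib mult.assoc)
    also have "\<dots> = card B * (\<Prod>s<Suc t. d2 - s)^2" by (simp only: prod.lessThan_Suc)
    finally show ?case .
  qed
  have pf: "(\<Prod>s<d2. d2 - s) = fact d2"
    by (metis fact_prod_rev of_nat_id atLeast0LessThan)
  have "a d2 * fact d2 * c^d2 \<le> card B * fact d2 * fact d2"
    using P[of d2] pf by (simp add: power2_eq_square algebra_simps)
  then have "a d2 * c^d2 \<le> card B * fact d2"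
    by (simp add: algebra_simps)
  also have "\<dots> \<le> card B * d2^d2" using fact_le_power[where 'a=nat, of d2] by simp
  finally have main: "a d2 * c^d2 \<le> card B * d2^d2" .
  have "card {E \<in> B. colN E j = colN E k} \<le> a d2"
    unfolding a_def
  proof (rule card_mono)
    show "finite {E \<in> B. card (colN E j \<inter> colN E k) = d2}" unfolding B_def using bir_finset by simp
    show "{E \<in> B. colN E j = colN E k} \<subseteq> {E \<in> B. card (colN E j \<inter> colN E k) = d2}"
      using bir_col jk unfolding B_def by auto
  qed
  then have "card {E \<in> B. colN E j = colN E k} * c^d2 \<le> a d2 * c^d2" by (rule mult_right_mono) simp
  then have "card {E \<in> B. colN E j = colN E k} * c^d2 \<le> card B * d2^d2" using main by (rule order_trans)
  then show ?thesis unfolding B_def c_def .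
qed


lemma inc_in:
  assumes "e \<in> hypergraphs n m d1 d2"
  shows "incidence m e \<in> biregular n m d1 d2"
proof -
  have e: "e \<in> {0..<m} \<rightarrow>\<^sub>E {A. A \<subseteq> {0..<n} \<and> card A = d2}"
    and r: "\<forall>i<n. card {j \<in> {0..<m}. i \<in> e j} = d1"
    using assms unfolding hypergraphs_def by auto
  have ej: "e j \<subseteq> {0..<n} \<and> card (e j) = d2" if "j < m" for j
    using e that by (auto simp: PiE_iff)
  have s: "incidence m e \<subseteq> {0..<n} \<times> {0..<m}"
    using ej unfolding incidence_def by auto
  have rr: "card {j. (i, j) \<in> incidence m e} = d1" if "i < n" for i
  proof -
    have "{j. (i, j) \<in> incidence m e} = {j \<in> {0..<m}. i \<in> e j}" unfolding incidence_def by auto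
    then show ?thesis using r that by simp
  qed
  have cc: "card {i. (i, j) \<in> incidence m e} = d2" if "j < m" for j
  proof -
    have "{i. (i, j) \<in> incidence m e} = e j" unfolding incidence_def using that by auto
    then show ?thesis using ej that by simp
  qed
  show ?thesis unfolding biregular_def using s rr cc by blast
qed

lemma inc_inj: "inj_on (incidence m) (hypergraphs n m d1 d2)"
proof (rule inj_onI)
  fix e1 e2 assume e1: "e1 \<in> hypergraphs n m d1 d2" and e2: "e2 \<in> hypergraphs n m d1 d2"
    and eq: "incidence m e1 = incidence m e2"
  have p1: "e1 \<in> {0..<m} \<rightarrow>\<^sub>E {A. A \<subseteq> {0..<n} \<and> card A = d2}" using e1 unfolding hypergraphs_def by auto
  have p2: "e2 \<in> {0..<m} \<rightarrow>\<^sub>E {A. A \<subseteq> {0..<n} \<and> card A = d2}" using e2 unfolding hypergraphs_def by auto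
  show "e1 = e2"
  proof (rule PiE_ext[OF p1 p2])
    fix j assume j: "j \<in> {0..<m}"
    have "e1 j = {i. (i,j) \<in> incidence m e1}" using j unfolding incidence_def by auto
    also have "\<dots> = {i. (i,j) \<in> incidence m e2}" using eq by simp
    also have "\<dots> = e2 j" using j unfolding incidence_def by auto
    finally show "e1 j = e2 j" .
  qed
qed

lemma finH: "finite (hypergraphs n m d1 d2)"
proof -
  have "hypergraphs n m d1 d2 \<subseteq> {0..<m} \<rightarrow>\<^sub>E {A. A \<subseteq> {0..<n} \<and> card A = d2}"
    unfolding hypergraphs_def by blast
  moreover have "finite {A. A \<subseteq> {0..<n} \<and> card A = d2}"
    by (rule finite_subset[of _ "Pow {0..<n}"]) auto
  ultimately show ?thesis using finite_subset finite_PiE by (metis finite_atLeastLessThan)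
qed

lemma cover:
  "biregular n m d1 d2 - incidence m ` hypergraphs n m d1 d2
     \<subseteq> (\<Union>p\<in>{(j,k). j < k \<and> k < m}. {E \<in> biregular n m d1 d2. colN E (fst p) = colN E (snd p)})"
proof
  fix E assume "E \<in> biregular n m d1 d2 - incidence m ` hypergraphs n m d1 d2"
  then have EB: "E \<in> biregular n m d1 d2" and nE: "E \<notin> incidence m ` hypergraphs n m d1 d2" by auto
  show "E \<in> (\<Union>p\<in>{(j,k). j < k \<and> k < m}. {E \<in> biregular n m d1 d2. colN E (fst p) = colN E (snd p)})"
  proof (rule ccontr)
    assume "\<not> ?thesis"
    then have ne: "colN E j \<noteq> colN E k" if "j < k" "k < m" for j k using that EB by auto
    define e where "e = restrict (colN E) {0..<m}"
    have eP: "e \<in> {0..<m} \<rightarrow>\<^sub>E {A. A \<subseteq> {0..<n} \<and> card A = d2}"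
      unfolding e_def using colN_sub[OF EB] bir_col[OF EB] by auto
    have inj: "inj_on e {0..<m}"
    proof (rule inj_onI)
      fix x y assume x: "x \<in> {0..<m}" and y: "y \<in> {0..<m}" and exy: "e x = e y"
      then have c: "colN E x = colN E y" unfolding e_def by simp
      show "x = y"
      proof (rule ccontr)
        assume "x \<noteq> y"
        then have "x < y \<or> y < x" by arith
        then show False using ne c x y by (metis atLeastLessThan_iff)
      qed
    qed
    have rows: "\<forall>i<n. card {j \<in> {0..<m}. i \<in> e j} = d1"
    proof (intro allI impI)
      fix i assume i: "i < n"
      have "{j \<in> {0..<m}. i \<in> e j} = rowN E i"
        unfolding e_def colN_def rowN_def using bir_sub[OF EB] by auto
      then show "card {j \<in> {0..<m}. i \<in> e j} = d1" using bir_row[OF EB i] by simp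
    qed
    have eH: "e \<in> hypergraphs n m d1 d2" unfolding hypergraphs_def using eP inj rows by blast
    have "incidence m e = E" unfolding incidence_def e_def colN_def using bir_sub[OF EB] by auto
    then show False using nE eH by blast
  qed
qed

lemma tv_bound:
  fixes B B' :: "'a set"
  assumes fin: "finite B" and sub: "B' \<subseteq> B" and ne: "B' \<noteq> {}"
  shows "tv_dist (pmf_of_set B') (pmf_of_set B) \<le> real (card (B - B')) / real (card B)"
proof -
  have finB': "finite B'" using fin sub finite_subset by auto
  have neB: "B \<noteq> {}" using ne sub by auto
  have p0: "card B' > 0" using finB' ne card_gt_0_iff by blast
  have pq: "card B' \<le> card B" using card_mono[OF fin sub] .
  have cd: "card (B - B') = card B - card B'" using card_Diff_subset[OF finB' sub] .
  show ?thesis unfolding tv_dist_def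
  proof (rule cSUP_least)
    fix A
    define p where "p = real (card B')"
    define q where "q = real (card B)"
    define x where "x = real (card (B' \<inter> A))"
    define y where "y = real (card (B \<inter> A))"
    have pp: "p > 0" using p0 unfolding p_def by simp
    have pq': "p \<le> q" using pq unfolding p_def q_def by simp
    have x0: "0 \<le> x" unfolding x_def by simp
    have xp: "x \<le> p" unfolding x_def p_def using card_mono[OF finB', of "B' \<inter> A"] by simp
    have xy: "x \<le> y" unfolding x_def y_def using card_mono[OF finite_Int[OF disjI1[OF fin]], of "B' \<inter> A"] sub by auto
    have "B \<inter> A \<subseteq> (B' \<inter> A) \<union> (B - B')" by auto
    then have "card (B \<inter> A) \<le> card ((B' \<inter> A) \<union> (B - B'))" by (intro card_mono) (use fin finB' in auto)
    also have "\<dots> \<le> card (B' \<inter> A) + card (B - B')" by (rule card_Un_le)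
    finally have yx: "y \<le> x + (q - p)" unfolding x_def y_def p_def q_def using cd pq by simp
    have P: "measure_pmf.prob (pmf_of_set B') A = x / p"
      unfolding x_def p_def using measure_pmf_of_set[OF ne finB'] by simp
    have Q: "measure_pmf.prob (pmf_of_set B) A = y / q"
      unfolding y_def q_def using measure_pmf_of_set[OF neB fin] by simp
    have R: "real (card (B - B')) / real (card B) = (q - p) / q" unfolding p_def q_def using cd pq by simp
    have qq: "q > 0" using pp pq' by simp
    have a1: "x / p - y / q \<le> (q - p) / q"
    proof -
      have "x / p - y / q \<le> x / p - x / q" using xy qq by (simp add: divide_right_mono)
      also have "\<dots> = x * (q - p) / (p * q)" using pp qq by (simp add: field_simps)
      also have "\<dots> \<le> p * (q - p) / (p * q)" using xp pq' pp qq
        by (intro divide_right_mono mult_right_mono) auto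
      also have "\<dots> = (q - p) / q" using pp by simp
      finally show ?thesis .
    qed
    have a2: "y / q - x / p \<le> (q - p) / q"
    proof -
      have "x / q \<le> x / p" using x0 pp pq' by (simp add: frac_le)
      then have "y / q - x / p \<le> y / q - x / q" by simp
      also have "\<dots> = (y - x) / q" by (simp add: diff_divide_distrib)
      also have "\<dots> \<le> (q - p) / q" using yx qq by (simp add: divide_right_mono)
      finally show ?thesis .
    qed
    show "\<bar>measure_pmf.prob (pmf_of_set B') A - measure_pmf.prob (pmf_of_set B) A\<bar>
          \<le> real (card (B - B')) / real (card B)"
      unfolding P Q R using a1 a2 by linarith
  qed simp
qed


lemma pair_bound:
  fixes n m d1 d2 j k :: nat
  assumes jk: "j < k" "k < m" and d1: "d1 > 0" and d2: "d2 > 0" and md: "m * d2 = n * d1"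
  shows "real (card {E \<in> biregular n m d1 d2. colN E j = colN E k})
          \<le> real (card (biregular n m d1 d2)) * (4 * exp 1 * real d2 / real n) ^ d2"
proof -
  define D where "D = {E \<in> biregular n m d1 d2. colN E j = colN E k}"
  define B where "B = biregular n m d1 d2"
  define X where "X = (4 * exp 1 * real d2 / real n) ^ d2"
  have DB: "card D \<le> card B" unfolding D_def B_def by (rule card_mono[OF bir_finset]) auto
  have e1: "exp 1 \<ge> (2::real)" using exp_ge_add_one_self[of 1] by simp
  have "n * d1 > 0" using md jk d2 by (metis gr_zeroI less_nat_zero_code mult_is_0)
  then have n0: "n > 0" by simp
  show ?thesis
  proof (cases "12 * exp 1 * real d2 \<le> (4 * exp 1 - 1) * real n")
    case True
    have "(4 * exp 1 - 1) * real n < 4 * exp 1 * real n" using n0 by (simp add: algebra_simps)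
    then have "12 * exp 1 * real d2 < 4 * exp 1 * real n" using True by linarith
    then have "exp 1 * (3 * real d2) < exp 1 * real n" by (simp add: algebra_simps)
    then have "3 * real d2 < real n" using mult_less_cancel_left_pos[of "exp 1"] by simp
    then have lt: "3 * d2 < n" by linarith
    define c where "c = n - 3 * d2"
    have c0: "c > 0" using lt unfolding c_def by simp
    have rc: "real c = real n - 3 * real d2" unfolding c_def using lt by simp
    have ch: "card D * c ^ d2 \<le> card B * d2 ^ d2"
      using chain[of j m k d1 n d2] jk d1 unfolding D_def B_def c_def by simp
    then have "real (card D) * real c ^ d2 \<le> real (card B) * real d2 ^ d2"
      by (metis of_nat_le_iff of_nat_mult of_nat_power)
    then have "real (card D) \<le> real (card B) * real d2 ^ d2 / real c ^ d2"
      using c0 by (simp add: field_simps)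
    also have "\<dots> = real (card B) * (real d2 / real c) ^ d2" by (simp add: power_divide)
    also have "\<dots> \<le> real (card B) * X"
    proof (rule mult_left_mono)
      have "4 * exp 1 * real c = 4 * exp 1 * real n - 12 * exp 1 * real d2" unfolding rc by (simp add: algebra_simps)
      then have "real n \<le> 4 * exp 1 * real c" using True by (simp add: algebra_simps)
      then have "real d2 / real c \<le> 4 * exp 1 * real d2 / real n"
      proof -
        have "real d2 * real n \<le> real d2 * (4 * exp 1 * real c)"
          using \<open>real n \<le> 4 * exp 1 * real c\<close> by (intro mult_left_mono) auto
        then show ?thesis using c0 n0 by (simp add: field_simps)
      qed
      then show "(real d2 / real c) ^ d2 \<le> X" unfolding X_def
        by (intro power_mono) auto
    qed simp
    finally show ?thesis unfolding D_def B_def X_def .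
  next
    case False
    then have "(4 * exp 1 - 1) * real n < 12 * exp 1 * real d2" by simp
    moreover have "3 * real n \<le> (4 * exp 1 - 1) * real n" using e1 by (intro mult_right_mono) auto
    ultimately have "real n \<le> 4 * exp 1 * real d2" by linarith
    then have "1 \<le> 4 * exp 1 * real d2 / real n" using n0 by simp
    then have X1: "1 \<le> X" unfolding X_def by (rule one_le_power)
    have "real (card D) \<le> real (card B)" using DB by simp
    also have "\<dots> \<le> real (card B) * X" using mult_left_mono[OF X1, of "real (card B)"] by simp
    finally show ?thesis unfolding D_def B_def X_def .
  qed
qed

theorem lemma6p9:
  fixes n m d1 d2 :: nat
  assumes "d1 > 0" and "d2 > 0"
    and "m * d2 = n * d1"
    and "hypergraphs n m d1 d2 \<noteq> {}"
  shows "tv_dist (mu_hyp n m d1 d2) (mu_unif n m d1 d2)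
           \<le> (real n * real d1 / real d2) ^ 2 * (4 * exp 1 * real d2 / real n) ^ d2"
proof -
  define H where "H = hypergraphs n m d1 d2"
  define B where "B = biregular n m d1 d2"
  define B' where "B' = incidence m ` H"
  define X where "X = (4 * exp 1 * real d2 / real n) ^ d2"
  define P where "P = {(j,k). j < k \<and> k < m}"
  define D where "D p = {E \<in> B. colN E (fst p) = colN E (snd p)}" for p
  have mh: "mu_hyp n m d1 d2 = pmf_of_set B'"
    unfolding mu_hyp_def B'_def H_def
    by (rule map_pmf_of_set_inj[OF inc_inj assms(4) finH])
  have sub: "B' \<subseteq> B" unfolding B'_def B_def H_def using inc_in by blast
  have ne: "B' \<noteq> {}" unfolding B'_def H_def using assms(4) by simp
  have finB: "finite B" unfolding B_def by (rule bir_finset)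
  have tv: "tv_dist (mu_hyp n m d1 d2) (mu_unif n m d1 d2) \<le> real (card (B - B')) / real (card B)"
    unfolding mh mu_unif_def B_def[symmetric] by (rule tv_bound[OF finB sub ne])
  have finP: "finite P" unfolding P_def
    by (rule finite_subset[of _ "{0..<m} \<times> {0..<m}"]) auto
  have Psub: "P \<subseteq> {0..<m} \<times> {0..<m}" unfolding P_def by auto
  have cP: "card P \<le> m * m"
    using card_mono[OF _ Psub] by (simp add: card_cartesian_product)
  have "card (B - B') \<le> card (\<Union>p\<in>P. D p)"
  proof (rule card_mono)
    show "finite (\<Union>p\<in>P. D p)" using finP finB unfolding D_def by auto
    show "B - B' \<subseteq> (\<Union>p\<in>P. D p)" using cover[of n m d1 d2] unfolding B_def B'_def H_def P_def D_def by simp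
  qed
  also have "\<dots> \<le> (\<Sum>p\<in>P. card (D p))" by (rule card_UN_le[OF finP])
  finally have c1: "real (card (B - B')) \<le> (\<Sum>p\<in>P. real (card (D p)))"
    by (metis of_nat_le_iff of_nat_sum)
  also have "\<dots> \<le> (\<Sum>p\<in>P. real (card B) * X)"
  proof (rule sum_mono)
    fix p assume "p \<in> P"
    then obtain j k where p: "p = (j,k)" "j < k" "k < m" unfolding P_def by auto
    show "real (card (D p)) \<le> real (card B) * X"
      using pair_bound[OF p(2,3) assms(1,2,3)] unfolding D_def B_def X_def p by simp
  qed
  also have "\<dots> = real (card P) * real (card B) * X" by simp
  finally have c2: "real (card (B - B')) \<le> real (card P) * real (card B) * X" .
  have Bpos: "real (card B) > 0" using finB sub ne card_gt_0_iff by fastforce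
  have X0: "X \<ge> 0" unfolding X_def by simp
  have "real (card (B - B')) / real (card B) \<le> real (card P) * X"
    using c2 Bpos by (simp add: field_simps)
  also have "\<dots> \<le> real (m * m) * X"
  proof (rule mult_right_mono)
    show "real (card P) \<le> real (m * m)" using cP by (simp only: of_nat_le_iff)
  qed (rule X0)
  also have "real (m * m) = (real n * real d1 / real d2) ^ 2"
  proof -
    have "real m = real n * real d1 / real d2" using assms(2,3)
      by (metis (mono_tags) nonzero_mult_div_cancel_right of_nat_0_less_iff of_nat_mult less_irrefl)
    then show ?thesis by (simp add: power2_eq_square)
  qed
  finally show ?thesis using tv unfolding X_def by linarith
qed

end
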